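(* Let $p$ be a prime, $S$ a finite $p$-group acting on a finitely generated abelian group $\mathcal{U}$, and $\varepsilon:\mathcal{U}\to\mathbb{F}_p^d$ a surjective homomorphism with $\varepsilon(su)=\varepsilon(u)$ for all $s\in S$, $u\in\mathcal{U}$. Let $L_1\oplus L_2=\mathbb{F}_p^d$ be a direct sum decomposition, $\pi_i$ the projections onto $L_i$ and $\varepsilon_i=\pi_i\circ\varepsilon$ for $i=1,2$. Suppose $C_1,C_2$ are numbers such that $|Su|\geq C_i$ whenever $\varepsilon_i(u)\neq0$ ($i=1,2$). Then $$\operatorname{Rank}(S,\mathcal{U};p)\geq C_1\dim_{\mathbb{F}_p}L_1+C_2\dim_{\mathbb{F}_p}L_2.$$
   Context: A subset $\Gamma\subset\mathcal{U}$ is $p$-generating if the subgroup it generates has finite index prime to $p$. For a finite group $S$ acting on $\mathcal{U}$ with Sylow $p$-subgroup $S_p$, $\operatorname{Rank}(S,\mathcal{U};p)$ is the minimal cardinality of an $S_p$-invariant $p$-generating subset of $\mathcal{U}$. $Su$ denotes the $S$-orbit of $u$. *)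

theory Defs
  imports "HOL-Algebra.Algebra" "HOL-Analysis.Analysis" "Berlekamp_Zassenhaus.Finite_Field"
begin

definition fin_gen_group :: "('a, 'b) monoid_scheme \<Rightarrow> bool" where
  "fin_gen_group G \<longleftrightarrow> (\<exists>A. finite A \<and> A \<subseteq> carrier G \<and> generate G A = carrier G)"

definition p_generating :: "('a, 'b) monoid_scheme \<Rightarrow> nat \<Rightarrow> 'a set \<Rightarrow> bool" where
  "p_generating G p \<Gamma> \<longleftrightarrow> \<Gamma> \<subseteq> carrier G
     \<and> finite (rcosets\<^bsub>G\<^esub> (generate G \<Gamma>))
     \<and> coprime (card (rcosets\<^bsub>G\<^esub> (generate G \<Gamma>))) p"

definition is_sylow :: "('a, 'b) monoid_scheme \<Rightarrow> nat \<Rightarrow> 'a set \<Rightarrow> bool" where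
  "is_sylow S p P \<longleftrightarrow> subgroup P S \<and> card P = p ^ multiplicity p (card (carrier S))"

definition sylow_subgroup :: "('a, 'b) monoid_scheme \<Rightarrow> nat \<Rightarrow> 'a set" where
  "sylow_subgroup S p = (SOME P. is_sylow S p P)"

definition Rank :: "('s, 'c) monoid_scheme \<Rightarrow> ('u, 'b) monoid_scheme \<Rightarrow> ('s \<Rightarrow> 'u \<Rightarrow> 'u) \<Rightarrow> nat \<Rightarrow> nat" where
  "Rank S U \<phi> p = Inf {card \<Gamma> | \<Gamma>. finite \<Gamma> \<and> p_generating U p \<Gamma>
       \<and> (\<forall>s \<in> sylow_subgroup S p. \<phi> s ` \<Gamma> \<subseteq> \<Gamma>)}"

definition dsum_proj :: "'v::ab_group_add set \<Rightarrow> 'v set \<Rightarrow> 'v \<Rightarrow> 'v" where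
  "dsum_proj L M v = (THE a. a \<in> L \<and> v - a \<in> M)"

end

theory Submission
  imports Defs
begin


lemma dsum_proj_unique:
  fixes L1 L2 :: "('a::field ^ 'n) set"
  assumes "vec.subspace L1" "vec.subspace L2" "L1 \<inter> L2 = {0}"
    and "a \<in> L1" "v - a \<in> L2"
  shows "dsum_proj L1 L2 v = a"
  unfolding dsum_proj_def
proof (rule the_equality)
  show "a \<in> L1 \<and> v - a \<in> L2" using assms by auto
  fix b assume b: "b \<in> L1 \<and> v - b \<in> L2"
  have "b - a \<in> L1" using b assms(1,4) by (simp add: vec.subspace_diff)
  moreover have "(v - a) - (v - b) \<in> L2" using b assms(5) vec.subspace_diff[OF assms(2)] by blast
  moreover have "(v - a) - (v - b) = b - a" by simp
  ultimately have "b - a \<in> L1 \<inter> L2" by auto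
  then show "b = a" using assms(3) by auto
qed

lemma dsum_proj_props:
  fixes L1 L2 :: "('a::field ^ 'n) set"
  assumes "vec.subspace L1" "vec.subspace L2" "L1 \<inter> L2 = {0}"
    and "\<forall>v. \<exists>a \<in> L1. \<exists>b \<in> L2. v = a + b"
  shows "dsum_proj L1 L2 v \<in> L1 \<and> v - dsum_proj L1 L2 v \<in> L2"
proof -
  obtain a b where "a \<in> L1" "b \<in> L2" "v = a + b" using assms(4) by blast
  then have "dsum_proj L1 L2 v = a" by (intro dsum_proj_unique[OF assms(1-3)]) auto
  then show ?thesis using \<open>a \<in> L1\<close> \<open>b \<in> L2\<close> \<open>v = a + b\<close> by auto
qed

lemma dsum_proj_linear:
  fixes L1 L2 :: "('a::field ^ 'n) set"
  assumes "vec.subspace L1" "vec.subspace L2" "L1 \<inter> L2 = {0}"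
    and "\<forall>v. \<exists>a \<in> L1. \<exists>b \<in> L2. v = a + b"
  shows "Vector_Spaces.linear (*s) (*s) (dsum_proj L1 L2)"
proof -
  note P = dsum_proj_props[OF assms]
  have A: "dsum_proj L1 L2 (x + y) = dsum_proj L1 L2 x + dsum_proj L1 L2 y" for x y
  proof (rule dsum_proj_unique[OF assms(1-3)])
    show "dsum_proj L1 L2 x + dsum_proj L1 L2 y \<in> L1" using P assms(1) by (simp add: vec.subspace_add)
    have "(x - dsum_proj L1 L2 x) + (y - dsum_proj L1 L2 y) \<in> L2" using P assms(2) by (simp add: vec.subspace_add)
    then show "x + y - (dsum_proj L1 L2 x + dsum_proj L1 L2 y) \<in> L2" by (simp add: algebra_simps)
  qed
  have B: "dsum_proj L1 L2 (c *s x) = c *s dsum_proj L1 L2 x" for c x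
  proof (rule dsum_proj_unique[OF assms(1-3)])
    show "c *s dsum_proj L1 L2 x \<in> L1" using P assms(1) by (simp add: vec.subspace_scale)
    have "c *s (x - dsum_proj L1 L2 x) \<in> L2" using P vec.subspace_scale[OF assms(2)] by blast
    then show "c *s x - c *s dsum_proj L1 L2 x \<in> L2" by (metis vector_ssub_ldistrib)
  qed
  show ?thesis unfolding Vector_Spaces.linear_iff using vec.vector_space_axioms A B by blast
qed

lemma dsum_proj_span:
  fixes L1 L2 :: "('a::field ^ 'n) set"
  assumes "vec.subspace L1" "vec.subspace L2" "L1 \<inter> L2 = {0}"
    and "\<forall>v. \<exists>a \<in> L1. \<exists>b \<in> L2. v = a + b"
    and "vec.span A = UNIV"
  shows "L1 \<subseteq> vec.span (dsum_proj L1 L2 ` A)"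
proof
  fix x assume "x \<in> L1"
  then have "dsum_proj L1 L2 x = x" by (intro dsum_proj_unique[OF assms(1-3)]) (auto simp: vec.subspace_0[OF assms(2)])
  moreover have "vec.span (dsum_proj L1 L2 ` A) = dsum_proj L1 L2 ` vec.span A"
    using dsum_proj_linear[OF assms(1-4)] module_hom_iff_linear module_hom.span_image by metis
  ultimately show "x \<in> vec.span (dsum_proj L1 L2 ` A)" using assms(5) by (metis UNIV_I image_eqI)
qed

lemma dim_sum_eq:
  fixes L1 L2 :: "('a::field ^ 'n) set"
  assumes "vec.subspace L1" "vec.subspace L2" "L1 \<inter> L2 = {0}"
    and "\<forall>v. \<exists>a \<in> L1. \<exists>b \<in> L2. v = a + b"
  shows "vec.dim L1 + vec.dim L2 = vec.dim (UNIV :: ('a ^ 'n) set)"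
proof -
  have "{x + y |x y. x \<in> L1 \<and> y \<in> L2} = UNIV" using assms(4) by blast
  moreover have "vec.dim {0::'a^'n} = 0" using vec.dim_le_card[of "{0::'a^'n}" "{}"] vec.span_empty by simp
  ultimately show ?thesis using vec.dim_sums_Int[OF assms(1,2)] assms(3) by simp
qed


lemma eps_one:
  fixes \<epsilon> :: "'u \<Rightarrow> 'v::ab_group_add"
  assumes "group U" "\<forall>x \<in> carrier U. \<forall>y \<in> carrier U. \<epsilon> (x \<otimes>\<^bsub>U\<^esub> y) = \<epsilon> x + \<epsilon> y"
  shows "\<epsilon> \<one>\<^bsub>U\<^esub> = 0"
proof -
  have "\<epsilon> \<one>\<^bsub>U\<^esub> = \<epsilon> \<one>\<^bsub>U\<^esub> + \<epsilon> \<one>\<^bsub>U\<^esub>"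
    using assms group.is_monoid monoid.one_closed monoid.l_one by metis
  then show ?thesis by simp
qed

lemma eps_inv:
  fixes \<epsilon> :: "'u \<Rightarrow> 'v::ab_group_add"
  assumes "group U" "\<forall>x \<in> carrier U. \<forall>y \<in> carrier U. \<epsilon> (x \<otimes>\<^bsub>U\<^esub> y) = \<epsilon> x + \<epsilon> y"
    and "x \<in> carrier U"
  shows "\<epsilon> (inv\<^bsub>U\<^esub> x) = - \<epsilon> x"
proof -
  have "\<epsilon> (inv\<^bsub>U\<^esub> x) + \<epsilon> x = \<epsilon> \<one>\<^bsub>U\<^esub>"
    using assms by (metis group.inv_closed group.l_inv)
  then show ?thesis using eps_one[OF assms(1,2)] by (simp add: eq_neg_iff_add_eq_0)
qed

lemma eps_pow:
  fixes \<epsilon> :: "'u \<Rightarrow> ('a::field ^ 'n)"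
  assumes "group U" "\<forall>x \<in> carrier U. \<forall>y \<in> carrier U. \<epsilon> (x \<otimes>\<^bsub>U\<^esub> y) = \<epsilon> x + \<epsilon> y"
    and "x \<in> carrier U"
  shows "\<epsilon> (x [^]\<^bsub>U\<^esub> (m::nat)) = of_nat m *s \<epsilon> x"
proof (induction m)
  case 0
  then show ?case using eps_one[OF assms(1,2)] by simp
next
  case (Suc m)
  have "\<epsilon> (x [^]\<^bsub>U\<^esub> Suc m) = \<epsilon> (x [^]\<^bsub>U\<^esub> m) + \<epsilon> x"
    using assms by (simp add: group.is_monoid monoid.nat_pow_Suc monoid.nat_pow_closed)
  then show ?case using Suc by (simp add: vector_sadd_rdistrib)
qed

lemma eps_generate:
  fixes \<epsilon> :: "'u \<Rightarrow> ('a::field ^ 'n)"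
  assumes "group U" "\<forall>x \<in> carrier U. \<forall>y \<in> carrier U. \<epsilon> (x \<otimes>\<^bsub>U\<^esub> y) = \<epsilon> x + \<epsilon> y"
    and "\<Gamma> \<subseteq> carrier U" and "h \<in> generate U \<Gamma>"
  shows "\<epsilon> h \<in> vec.span (\<epsilon> ` \<Gamma>)"
  using assms(4)
proof (induction h rule: generate.induct)
  case one
  then show ?case using eps_one[OF assms(1,2)] vec.span_zero by simp
next
  case (incl h)
  then show ?case by (simp add: vec.span_base)
next
  case (inv h)
  have "h \<in> carrier U" using inv.hyps assms(3) by blast
  then have "\<epsilon> (inv\<^bsub>U\<^esub> h) = - \<epsilon> h" by (rule eps_inv[OF assms(1,2)])
  moreover have "\<epsilon> h \<in> vec.span (\<epsilon> ` \<Gamma>)" using inv.hyps by (simp add: vec.span_base)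
  ultimately show ?case by (simp add: vec.span_neg)
next
  case (eng h1 h2)
  have "h1 \<in> carrier U" "h2 \<in> carrier U"
    using eng.hyps assms(1,3) group.generate_is_subgroup subgroup.subset by blast+
  then have "\<epsilon> (h1 \<otimes>\<^bsub>U\<^esub> h2) = \<epsilon> h1 + \<epsilon> h2" using assms(2) by blast
  then show ?case using eng.IH vec.span_add by metis
qed

lemma pow_in_subgroup:
  assumes "comm_group U" "subgroup H U" "finite (rcosets\<^bsub>U\<^esub> H)" "u \<in> carrier U"
  shows "u [^]\<^bsub>U\<^esub> card (rcosets\<^bsub>U\<^esub> H) \<in> H"
proof -
  interpret comm_group U by fact
  have N: "H \<lhd> U" using assms(2) subgroup_imp_normal by blast
  interpret Q: group "U Mod H" using normal.factorgroup_is_group[OF N] .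
  have c: "H #>\<^bsub>U\<^esub> u \<in> carrier (U Mod H)"
    using assms(2,4) by (simp add: FactGroup_def rcosetsI subgroup.subset)
  have "(H #>\<^bsub>U\<^esub> u) [^]\<^bsub>U Mod H\<^esub> Coset.order (U Mod H) = H"
    using Q.pow_order_eq_1[OF c] by simp
  moreover have "Coset.order (U Mod H) = card (rcosets\<^bsub>U\<^esub> H)" by (simp add: Coset.order_def FactGroup_def)
  ultimately have "H #>\<^bsub>U\<^esub> (u [^]\<^bsub>U\<^esub> card (rcosets\<^bsub>U\<^esub> H)) = H"
    using normal.FactGroup_pow[OF N assms(4)] by simp
  moreover have "u [^]\<^bsub>U\<^esub> card (rcosets\<^bsub>U\<^esub> H) \<in> H #>\<^bsub>U\<^esub> (u [^]\<^bsub>U\<^esub> card (rcosets\<^bsub>U\<^esub> H))"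
    using rcos_self assms(2,4) by simp
  ultimately show ?thesis by simp
qed

lemma span_all:
  fixes \<epsilon> :: "'u \<Rightarrow> ('p::prime_card mod_ring ^ 'n)"
  assumes "comm_group U" "p_generating U CARD('p) \<Gamma>"
    and "\<forall>x \<in> carrier U. \<forall>y \<in> carrier U. \<epsilon> (x \<otimes>\<^bsub>U\<^esub> y) = \<epsilon> x + \<epsilon> y"
    and "\<epsilon> ` carrier U = UNIV"
  shows "vec.span (\<epsilon> ` \<Gamma>) = UNIV"
proof -
  interpret comm_group U by fact
  define H where "H = generate U \<Gamma>"
  define m where "m = card (rcosets\<^bsub>U\<^esub> H)"
  have G: "\<Gamma> \<subseteq> carrier U" "finite (rcosets\<^bsub>U\<^esub> H)" "coprime m CARD('p)"
    using assms(2) unfolding p_generating_def H_def m_def by auto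
  have sg: "subgroup H U" unfolding H_def using G(1) generate_is_subgroup by blast
  have "\<not> CARD('p) dvd m"
    proof
    assume "CARD('p) dvd m"
    then have "CARD('p) dvd gcd m CARD('p)" by simp
    then have "CARD('p) dvd 1" using G(3) by simp
    then show False using prime_card[where 'a='p] by simp
  qed
  then have nz: "(of_nat m :: 'p mod_ring) \<noteq> 0"
    by (simp add: of_nat_eq_0_iff_char_dvd)
  have "v \<in> vec.span (\<epsilon> ` \<Gamma>)" for v
  proof -
    obtain u where u: "u \<in> carrier U" "v = \<epsilon> u" using assms(4) by (metis UNIV_I imageE)
    have "u [^]\<^bsub>U\<^esub> m \<in> H" unfolding m_def using pow_in_subgroup[OF assms(1) sg G(2) u(1)] .
    then have "\<epsilon> (u [^]\<^bsub>U\<^esub> m) \<in> vec.span (\<epsilon> ` \<Gamma>)"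
      using eps_generate[OF is_group assms(3) G(1)] H_def by blast
    then have "of_nat m *s v \<in> vec.span (\<epsilon> ` \<Gamma>)" using eps_pow[OF is_group assms(3) u(1)] u(2) by simp
    then have "inverse (of_nat m) *s (of_nat m *s v) \<in> vec.span (\<epsilon> ` \<Gamma>)" by (rule vec.span_scale)
    then show ?thesis using nz by (simp add: vector_smult_assoc)
  qed
  then show ?thesis by auto
qed


lemma combine_aux:
  fixes w :: "'a \<Rightarrow> real"
  assumes "finite N1" "finite N2"
    and "\<forall>x\<in>N1. w x \<ge> c1" "\<forall>x\<in>N2. w x \<ge> c2" "0 \<le> c2" "c2 \<le> c1"
    and "d1 \<le> card N1" "d1 + d2 \<le> card (N1 \<union> N2)"
  shows "c1 * real d1 + c2 * real d2 \<le> sum w (N1 \<union> N2)"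
proof -
  have fin: "finite (N1 \<union> N2)" using assms(1,2) by simp
  have "sum w (N1 \<union> N2) = sum w N1 + sum w ((N1 \<union> N2) - N1)"
    using sum.subset_diff[OF _ fin, of N1 w] by simp
  moreover have "sum w N1 \<ge> c1 * real (card N1)"
    using sum_mono[of N1 "\<lambda>_. c1" w] assms(3) by (simp add: mult.commute)
  moreover have "sum w ((N1 \<union> N2) - N1) \<ge> c2 * real (card ((N1 \<union> N2) - N1))"
    using sum_mono[of "(N1 \<union> N2) - N1" "\<lambda>_. c2" w] assms(4) by (auto simp: mult.commute)
  moreover have "card ((N1 \<union> N2) - N1) = card (N1 \<union> N2) - card N1"
    using card_Diff_subset[of N1 "N1 \<union> N2"] assms(1) by auto
  moreover have "card N1 \<le> card (N1 \<union> N2)" using card_mono[OF fin] by auto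
  ultimately have "sum w (N1 \<union> N2) \<ge> c1 * real (card N1) + c2 * (real (card (N1 \<union> N2)) - real (card N1))"
    by (simp add: of_nat_diff)
  moreover have "c1 * real (card N1) + c2 * (real (card (N1 \<union> N2)) - real (card N1))
      = (c1 - c2) * real (card N1) + c2 * real (card (N1 \<union> N2))" by (simp add: algebra_simps)
  moreover have "(c1 - c2) * real (card N1) \<ge> (c1 - c2) * real d1"
    using assms(6,7) by (simp add: mult_left_mono)
  moreover have "c2 * real (card (N1 \<union> N2)) \<ge> c2 * (real d1 + real d2)"
    using assms(5,8) by (metis mult_left_mono of_nat_add of_nat_le_iff)
  ultimately show ?thesis by (simp add: algebra_simps)
qed

lemma combine:
  fixes w :: "'a \<Rightarrow> real"
  assumes "finite N1" "finite N2"
    and "\<forall>x\<in>N1. w x \<ge> c1" "\<forall>x\<in>N2. w x \<ge> c2" "0 \<le> c2" "0 \<le> c1"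
    and "d1 \<le> card N1" "d2 \<le> card N2" "d1 + d2 \<le> card (N1 \<union> N2)"
  shows "c1 * real d1 + c2 * real d2 \<le> sum w (N1 \<union> N2)"
proof (cases "c2 \<le> c1")
  case True
  show ?thesis by (rule combine_aux[OF assms(1-5) True assms(7,9)])
next
  case False
  have "c2 * real d2 + c1 * real d1 \<le> sum w (N2 \<union> N1)"
    using combine_aux[OF assms(2,1,4,3,6) _ assms(8)] False assms(9)
    by (simp add: Un_commute add.commute)
  then show ?thesis by (simp add: Un_commute add.commute)
qed

lemma orbit_eq:
  assumes "group_action S E \<phi>" "a \<in> E" "x \<in> orbit S \<phi> a"
  shows "orbit S \<phi> x = orbit S \<phi> a"
proof -
  interpret A: group_action S E \<phi> by fact
  have xE: "x \<in> E" using assms(2,3) A.element_image unfolding orbit_def by blast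
  have aox: "a \<in> orbit S \<phi> x" using A.orbit_sym[OF assms(2) xE assms(3)] .
  show ?thesis
  proof
    show "orbit S \<phi> x \<subseteq> orbit S \<phi> a"
    proof
      fix y assume y: "y \<in> orbit S \<phi> x"
      have yE: "y \<in> E" using xE y A.element_image unfolding orbit_def by blast
      show "y \<in> orbit S \<phi> a" using A.orbit_trans[OF assms(2) xE yE assms(3) y] .
    qed
    show "orbit S \<phi> a \<subseteq> orbit S \<phi> x"
    proof
      fix y assume y: "y \<in> orbit S \<phi> a"
      have yE: "y \<in> E" using assms(2) y A.element_image unfolding orbit_def by blast
      show "y \<in> orbit S \<phi> x" using A.orbit_trans[OF xE assms(2) yE aox y] .
    qed
  qed
qed

lemma proj_swap:
  fixes L1 L2 :: "('a::field ^ 'n) set"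
  assumes "vec.subspace L1" "vec.subspace L2" "L1 \<inter> L2 = {0}"
    and "\<forall>v. \<exists>a \<in> L1. \<exists>b \<in> L2. v = a + b"
  shows "dsum_proj L2 L1 v = v - dsum_proj L1 L2 v"
proof (rule dsum_proj_unique[OF assms(2,1)])
  show "L2 \<inter> L1 = {0}" using assms(3) by blast
  show "v - dsum_proj L1 L2 v \<in> L2" using dsum_proj_props[OF assms] by blast
  show "v - (v - dsum_proj L1 L2 v) \<in> L1" using dsum_proj_props[OF assms] by simp
qed

lemma main_count:
  fixes \<epsilon> :: "'u \<Rightarrow> ('a::field ^ 'n)"
    and L1 L2 :: "('a ^ 'n) set" and C1 C2 :: real
  assumes act: "group_action S E \<phi>" and GE: "\<Gamma> \<subseteq> E" and fin: "finite \<Gamma>"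
    and inv: "\<forall>s \<in> carrier S. \<phi> s ` \<Gamma> \<subseteq> \<Gamma>"
    and epsinv: "\<forall>s \<in> carrier S. \<forall>u \<in> E. \<epsilon> (\<phi> s u) = \<epsilon> u"
    and span: "vec.span (\<epsilon> ` \<Gamma>) = UNIV"
    and L: "vec.subspace L1" "vec.subspace L2" "L1 \<inter> L2 = {0}" "\<forall>v. \<exists>a \<in> L1. \<exists>b \<in> L2. v = a + b"
    and o1: "\<forall>u \<in> E. dsum_proj L1 L2 (\<epsilon> u) \<noteq> 0 \<longrightarrow> real (card (orbit S \<phi> u)) \<ge> C1"
    and o2: "\<forall>u \<in> E. dsum_proj L2 L1 (\<epsilon> u) \<noteq> 0 \<longrightarrow> real (card (orbit S \<phi> u)) \<ge> C2"
  shows "C1 * real (vec.dim L1) + C2 * real (vec.dim L2) \<le> real (card \<Gamma>)"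
proof -
  interpret A: group_action S E \<phi> by fact
  have L': "vec.subspace L2" "vec.subspace L1" "L2 \<inter> L1 = {0}" "\<forall>v. \<exists>a \<in> L2. \<exists>b \<in> L1. v = a + b"
    using L by (auto simp: Int_commute) (metis add.commute)
  define \<pi>1 where "\<pi>1 = dsum_proj L1 L2"
  define \<pi>2 where "\<pi>2 = dsum_proj L2 L1"
  define T where "T = orbit S \<phi> ` \<Gamma>"
  define val where "val Q = \<epsilon> (SOME x. x \<in> Q)" for Q
  have orb_sub: "orbit S \<phi> a \<subseteq> \<Gamma>" if "a \<in> \<Gamma>" for a
    using inv that unfolding orbit_def by blast
  have finT: "finite T" unfolding T_def using fin by simp
  have finO: "finite Q" if "Q \<in> T" for Q using that orb_sub fin unfolding T_def by (auto intro: finite_subset)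
  have UT: "\<Union> T = \<Gamma>" unfolding T_def using orb_sub A.orbit_refl GE by blast
  have disj: "pairwise disjnt T"
  proof (rule pairwiseI)
    fix P1 P2 assume P1: "P1 \<in> T" and P2: "P2 \<in> T" and ne: "P1 \<noteq> P2"
    obtain a where a: "a \<in> \<Gamma>" "P1 = orbit S \<phi> a" using P1 unfolding T_def by blast
    obtain b where b: "b \<in> \<Gamma>" "P2 = orbit S \<phi> b" using P2 unfolding T_def by blast
    show "disjnt P1 P2"
    proof (rule ccontr)
      assume "\<not> disjnt P1 P2"
      then obtain x where xa: "x \<in> orbit S \<phi> a" and xb: "x \<in> orbit S \<phi> b"
        using a b unfolding disjnt_def by blast
      have "orbit S \<phi> x = orbit S \<phi> a" using orbit_eq[OF act _ xa] a GE by blast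
      moreover have "orbit S \<phi> x = orbit S \<phi> b" using orbit_eq[OF act _ xb] b GE by blast
      ultimately show False using ne a b by simp
    qed
  qed
  have cardG: "card \<Gamma> = sum card T"
    using card_Union_disjoint[OF disj finO] UT by simp
  have val_orb: "val (orbit S \<phi> a) = \<epsilon> a" if "a \<in> \<Gamma>" for a
  proof -
    have aE: "a \<in> E" using that GE by blast
    have "\<exists>x. x \<in> orbit S \<phi> a" using A.orbit_refl[OF aE] by blast
    then have "(SOME x. x \<in> orbit S \<phi> a) \<in> orbit S \<phi> a" by (rule someI_ex)
    then obtain g where "g \<in> carrier S" "(SOME x. x \<in> orbit S \<phi> a) = \<phi> g a"
      unfolding orbit_def by blast
    then show ?thesis unfolding val_def using epsinv aE by simp
  qed
  have valT: "val ` T = \<epsilon> ` \<Gamma>" unfolding T_def using val_orb by (auto simp: image_image)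
  define N1 where "N1 = {Q \<in> T. \<pi>1 (val Q) \<noteq> 0}"
  define N2 where "N2 = {Q \<in> T. \<pi>2 (val Q) \<noteq> 0}"
  have finN: "finite N1" "finite N2" unfolding N1_def N2_def using finT by auto
  have w1: "\<forall>Q\<in>N1. real (card Q) \<ge> max C1 0"
  proof
    fix Q assume "Q \<in> N1"
    then obtain a where a: "a \<in> \<Gamma>" "Q = orbit S \<phi> a" "\<pi>1 (\<epsilon> a) \<noteq> 0"
      unfolding N1_def T_def using val_orb by auto
    then show "real (card Q) \<ge> max C1 0" using o1 GE unfolding \<pi>1_def by auto
  qed
  have w2: "\<forall>Q\<in>N2. real (card Q) \<ge> max C2 0"
  proof
    fix Q assume "Q \<in> N2"
    then obtain a where a: "a \<in> \<Gamma>" "Q = orbit S \<phi> a" "\<pi>2 (\<epsilon> a) \<noteq> 0"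
      unfolding N2_def T_def using val_orb by auto
    then show "real (card Q) \<ge> max C2 0" using o2 GE unfolding \<pi>2_def by auto
  qed
  have spanT: "vec.span (val ` T) = UNIV" using span valT by simp
  have d1: "vec.dim L1 \<le> card N1"
  proof -
    have "L1 \<subseteq> vec.span (\<pi>1 ` val ` T)" unfolding \<pi>1_def by (rule dsum_proj_span[OF L spanT])
    moreover have "\<pi>1 ` val ` T \<subseteq> insert 0 (\<pi>1 ` val ` N1)" unfolding N1_def by auto
    then have "vec.span (\<pi>1 ` val ` T) \<subseteq> vec.span (\<pi>1 ` val ` N1)"
      by (metis vec.span_mono vec.span_insert_0)
    ultimately have "vec.dim L1 \<le> card (\<pi>1 ` val ` N1)"
      using vec.dim_le_card finN by (metis finite_imageI subset_trans)
    also have "\<dots> \<le> card N1" using finN card_image_le by (metis finite_imageI image_image)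
    finally show ?thesis .
  qed
  have d2: "vec.dim L2 \<le> card N2"
  proof -
    have "L2 \<subseteq> vec.span (\<pi>2 ` val ` T)" unfolding \<pi>2_def by (rule dsum_proj_span[OF L' spanT])
    moreover have "\<pi>2 ` val ` T \<subseteq> insert 0 (\<pi>2 ` val ` N2)" unfolding N2_def by auto
    then have "vec.span (\<pi>2 ` val ` T) \<subseteq> vec.span (\<pi>2 ` val ` N2)"
      by (metis vec.span_mono vec.span_insert_0)
    ultimately have "vec.dim L2 \<le> card (\<pi>2 ` val ` N2)"
      using vec.dim_le_card finN by (metis finite_imageI subset_trans)
    also have "\<dots> \<le> card N2" using finN card_image_le by (metis finite_imageI image_image)
    finally show ?thesis .
  qed
  have d12: "vec.dim L1 + vec.dim L2 \<le> card (N1 \<union> N2)"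
  proof -
    have "val ` T \<subseteq> insert 0 (val ` (N1 \<union> N2))"
    proof
      fix v assume "v \<in> val ` T"
      then obtain Q where Q: "Q \<in> T" "v = val Q" by blast
      show "v \<in> insert 0 (val ` (N1 \<union> N2))"
      proof (cases "\<pi>1 v = 0 \<and> \<pi>2 v = 0")
        case True
        then have "v = 0" using proj_swap[OF L, of v] unfolding \<pi>1_def \<pi>2_def by (metis diff_zero)
        then show ?thesis by simp
      next
        case False
        then have "Q \<in> N1 \<union> N2" unfolding N1_def N2_def using Q by auto
        then show ?thesis using Q by blast
      qed
    qed
    then have "(UNIV :: ('a^'n) set) \<subseteq> vec.span (val ` (N1 \<union> N2))"
      using spanT by (metis vec.span_mono vec.span_insert_0)
    then have "vec.dim (UNIV :: ('a^'n) set) \<le> card (val ` (N1 \<union> N2))"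
      using vec.dim_le_card finN by blast
    also have "\<dots> \<le> card (N1 \<union> N2)" using finN card_image_le by blast
    finally show ?thesis using dim_sum_eq[OF L] by simp
  qed
  have "max C1 0 * real (vec.dim L1) + max C2 0 * real (vec.dim L2) \<le> sum (\<lambda>Q. real (card Q)) (N1 \<union> N2)"
    by (rule combine[OF finN w1 w2 _ _ d1 d2 d12]) auto
  also have "\<dots> \<le> sum (\<lambda>Q. real (card Q)) T"
    by (rule sum_mono2[OF finT]) (auto simp: N1_def N2_def)
  also have "\<dots> = real (card \<Gamma>)" using cardG by simp
  finally have "max C1 0 * real (vec.dim L1) + max C2 0 * real (vec.dim L2) \<le> real (card \<Gamma>)" .
  moreover have "C1 * real (vec.dim L1) \<le> max C1 0 * real (vec.dim L1)" by (simp add: mult_right_mono)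
  moreover have "C2 * real (vec.dim L2) \<le> max C2 0 * real (vec.dim L2)" by (simp add: mult_right_mono)
  ultimately show ?thesis by linarith
qed


theorem lemma13p1:
  fixes S :: "('s, 'c) monoid_scheme" and U :: "('u, 'b) monoid_scheme"
    and \<phi> :: "'s \<Rightarrow> 'u \<Rightarrow> 'u"
    and \<epsilon> :: "'u \<Rightarrow> ('p::prime_card mod_ring) ^ 'n"
    and L1 L2 :: "(('p::prime_card mod_ring) ^ 'n) set"
    and C1 C2 :: real
  assumes "group S" and "finite (carrier S)" and "\<exists>k. card (carrier S) = CARD('p) ^ k"
    and "comm_group U" and "fin_gen_group U"
    and "group_action S (carrier U) \<phi>"
    and "\<forall>s \<in> carrier S. \<phi> s \<in> hom U U"
    and "\<forall>x \<in> carrier U. \<forall>y \<in> carrier U. \<epsilon> (x \<otimes>\<^bsub>U\<^esub> y) = \<epsilon> x + \<epsilon> y"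
    and "\<epsilon> ` carrier U = UNIV"
    and "\<forall>s \<in> carrier S. \<forall>u \<in> carrier U. \<epsilon> (\<phi> s u) = \<epsilon> u"
    and "vec.subspace L1" and "vec.subspace L2"
    and "L1 \<inter> L2 = {0}" and "\<forall>v. \<exists>a \<in> L1. \<exists>b \<in> L2. v = a + b"
    and "\<forall>u \<in> carrier U. dsum_proj L1 L2 (\<epsilon> u) \<noteq> 0 \<longrightarrow> real (card (orbit S \<phi> u)) \<ge> C1"
    and "\<forall>u \<in> carrier U. dsum_proj L2 L1 (\<epsilon> u) \<noteq> 0 \<longrightarrow> real (card (orbit S \<phi> u)) \<ge> C2"
  shows "real (Rank S U \<phi> CARD('p)) \<ge> C1 * real (vec.dim L1) + C2 * real (vec.dim L2)"
proof -
  define p where "p = CARD('p)"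
  have pp: "Factorial_Ring.prime p" unfolding p_def by (rule prime_card)
  interpret Sg: group S by fact
  interpret Ug: comm_group U by fact
  interpret A: group_action S "carrier U" \<phi> by fact
  obtain k where k: "card (carrier S) = p ^ k" using assms(3) unfolding p_def by blast
  have mult: "multiplicity p (p ^ k) = k"
    using pp by (simp add: multiplicity_same_power' prime_gt_1_nat) (metis not_prime_1 One_nat_def)
  have isS: "is_sylow S p (carrier S)"
    unfolding is_sylow_def using Sg.subgroup_self k mult by simp
  have syl: "sylow_subgroup S p = carrier S"
  proof -
    have "is_sylow S p (sylow_subgroup S p)"
      unfolding sylow_subgroup_def using isS by (rule someI)
    then have "subgroup (sylow_subgroup S p) S" "card (sylow_subgroup S p) = card (carrier S)"
      unfolding is_sylow_def using k mult by auto
    then show ?thesis using card_subset_eq[OF assms(2)] subgroup.subset by metis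
  qed
  define K where "K = {card \<Gamma> | \<Gamma>. finite \<Gamma> \<and> p_generating U p \<Gamma>
       \<and> (\<forall>s \<in> carrier S. \<phi> s ` \<Gamma> \<subseteq> \<Gamma>)}"
  have R: "Rank S U \<phi> CARD('p) = Inf K" unfolding Rank_def K_def syl p_def[symmetric] by simp
  have "K \<noteq> {}"
  proof -
    obtain B where B: "finite B" "B \<subseteq> carrier U" "generate U B = carrier U"
      using assms(5) unfolding fin_gen_group_def by blast
    define \<Gamma>0 where "\<Gamma>0 = (\<Union>b\<in>B. orbit S \<phi> b)"
    have orbfin: "finite (orbit S \<phi> b)" for b
    proof -
      have "orbit S \<phi> b = (\<lambda>g. \<phi> g b) ` carrier S" unfolding orbit_def by blast
      then show ?thesis using assms(2) by simp
    qed
    have fin0: "finite \<Gamma>0" unfolding \<Gamma>0_def using B(1) orbfin by blast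
    have sub0: "\<Gamma>0 \<subseteq> carrier U"
      unfolding \<Gamma>0_def orbit_def using B(2) A.element_image by blast
    have inv0: "\<forall>s \<in> carrier S. \<phi> s ` \<Gamma>0 \<subseteq> \<Gamma>0"
    proof (intro ballI subsetI)
      fix s y assume s: "s \<in> carrier S" and "y \<in> \<phi> s ` \<Gamma>0"
      then obtain b g where bg: "b \<in> B" "g \<in> carrier S" "y = \<phi> s (\<phi> g b)"
        unfolding \<Gamma>0_def orbit_def by blast
      then have "y = \<phi> (s \<otimes>\<^bsub>S\<^esub> g) b" using A.composition_rule B(2) s by auto
      then show "y \<in> \<Gamma>0" unfolding \<Gamma>0_def orbit_def using bg s by blast
    qed
    have B0: "B \<subseteq> \<Gamma>0" unfolding \<Gamma>0_def using A.orbit_refl B(2) by blast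
    have gen0: "generate U \<Gamma>0 = carrier U"
      using Ug.mono_generate[OF B0] B(3) Ug.generate_incl[OF sub0] by blast
    have rc: "rcosets\<^bsub>U\<^esub> (carrier U) = {carrier U}"
    proof -
      have "carrier U #>\<^bsub>U\<^esub> x = carrier U" if "x \<in> carrier U" for x
        using subgroup.rcos_const[OF Ug.subgroup_self Ug.is_group that] .
      then show ?thesis unfolding RCOSETS_def using Ug.one_closed by blast
    qed
    have "p_generating U p \<Gamma>0" unfolding p_generating_def gen0 rc using sub0 by simp
    then have "card \<Gamma>0 \<in> K" unfolding K_def using fin0 inv0 by blast
    then show ?thesis by blast
  qed
  then have "Inf K \<in> K" by (rule Inf_nat_def1)
  then obtain \<Gamma> where G: "Inf K = card \<Gamma>" "finite \<Gamma>" "p_generating U p \<Gamma>"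
      "\<forall>s \<in> carrier S. \<phi> s ` \<Gamma> \<subseteq> \<Gamma>"
    unfolding K_def by blast
  have GU: "\<Gamma> \<subseteq> carrier U" using G(3) unfolding p_generating_def by blast
  have sp: "vec.span (\<epsilon> ` \<Gamma>) = UNIV"
    using span_all[OF assms(4) G(3)[unfolded p_def] assms(8,9)] .
  have "C1 * real (vec.dim L1) + C2 * real (vec.dim L2) \<le> real (card \<Gamma>)"
    by (rule main_count[OF assms(6) GU G(2) G(4) assms(10) sp assms(11-16)])
  then show ?thesis using R G(1) by simp
qed

end
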